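(* Let $A\in\mathbb{R}^{m\times n}$ be semi-monotone (i.e. $A^{\dagger}\geq 0$). Let $A=B-C$ be a proper weak regular splitting and $A=U-V$ a proper regular splitting of $A$. If $B^{\dagger}\geq U^{\dagger}$ and all row sums of $U^{\dagger}$ are positive, then $$\rho(B^{\dagger}C)\leq \rho(U^{\dagger}V)<1.$$
   Context: All matrices are real. $X^{\dagger}$ denotes the Moore–Penrose inverse of $X$, and $\rho(\cdot)$ the spectral radius. For a matrix $X$, $X\geq 0$ means that all entries of $X$ are nonnegative and at least one entry is positive; $X\geq Y$ means $X-Y\geq 0$. $R(X)$ and $N(X)$ denote range and null space. A splitting $A=U-V$ is proper if $R(U)=R(A)$ and $N(U)=N(A)$. It is a proper regular splitting if it is proper, $U^{\dagger}\geq 0$ and $V\geq 0$; it is a proper weak regular splitting if it is proper, $U^{\dagger}\geq 0$ and $U^{\dagger}V\geq 0$. *)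

theory Defs
  imports "HOL-Analysis.Analysis"
begin

text \<open>Real m x n matrices are rendered as real^'n^'m (rows indexed by 'm).\<close>

definition moore_penrose :: "real^'n^'m \<Rightarrow> real^'m^'n" where
  "moore_penrose A = (THE X. A ** X ** A = A \<and> X ** A ** X = X \<and>
      transpose (A ** X) = A ** X \<and> transpose (X ** A) = X ** A)"

definition mat_nonneg :: "real^'n^'m \<Rightarrow> bool" where
  "mat_nonneg X \<longleftrightarrow> (\<forall>i j. X$i$j \<ge> 0) \<and> (\<exists>i j. X$i$j > 0)"

definition mat_ge :: "real^'n^'m \<Rightarrow> real^'n^'m \<Rightarrow> bool" where
  "mat_ge X Y \<longleftrightarrow> mat_nonneg (X - Y)"

definition mat_range :: "real^'n^'m \<Rightarrow> (real^'m) set" where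
  "mat_range A = range (\<lambda>x. A *v x)"

definition mat_null :: "real^'n^'m \<Rightarrow> (real^'n) set" where
  "mat_null A = {x. A *v x = 0}"

definition proper_splitting :: "real^'n^'m \<Rightarrow> real^'n^'m \<Rightarrow> real^'n^'m \<Rightarrow> bool" where
  "proper_splitting A U V \<longleftrightarrow> A = U - V \<and> mat_range U = mat_range A \<and> mat_null U = mat_null A"

definition proper_regular_splitting :: "real^'n^'m \<Rightarrow> real^'n^'m \<Rightarrow> real^'n^'m \<Rightarrow> bool" where
  "proper_regular_splitting A U V \<longleftrightarrow>
     proper_splitting A U V \<and> mat_nonneg (moore_penrose U) \<and> mat_nonneg V"

definition proper_weak_regular_splitting :: "real^'n^'m \<Rightarrow> real^'n^'m \<Rightarrow> real^'n^'m \<Rightarrow> bool" where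
  "proper_weak_regular_splitting A U V \<longleftrightarrow>
     proper_splitting A U V \<and> mat_nonneg (moore_penrose U) \<and> mat_nonneg (moore_penrose U ** V)"

definition complexify :: "real^'n^'m \<Rightarrow> complex^'n^'m" where
  "complexify M = (\<chi> i j. complex_of_real (M$i$j))"

definition spectral_radius :: "real^'n^'n \<Rightarrow> real" where
  "spectral_radius M = Max {cmod l | l. \<exists>v. v \<noteq> 0 \<and> complexify M *v v = l *s v}"

end

theory Submission
  imports Defs "Jordan_Normal_Form.Spectral_Radius"
begin


no_notation Matrix.vec_index (infixl \<open>$\<close> 100)
hide_const (open) Matrix.orthogonal


lemma mm_diff_l: "(A::'a::ring_1^'n^'m) ** (B - C) = A ** B - A ** C"
  by (simp add: matrix_matrix_mult_def Finite_Cartesian_Product.vec_eq_iff sum_subtractf right_diff_distrib)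
lemma mm_diff_r: "((A::'a::ring_1^'n^'m) - B) ** C = A ** C - B ** C"
  by (simp add: matrix_matrix_mult_def Finite_Cartesian_Product.vec_eq_iff sum_subtractf left_diff_distrib)
lemma mm_add_r: "((A::'a::ring_1^'n^'m) + B) ** C = A ** C + B ** C"
  by (simp add: matrix_matrix_mult_def Finite_Cartesian_Product.vec_eq_iff sum.distrib distrib_right)
lemma transpose_diff: "transpose ((A::'a::ring_1^'n^'m) - B) = transpose A - transpose B"
  by (simp add: transpose_def Finite_Cartesian_Product.vec_eq_iff)

definition is_mp :: "real^'n^'m \<Rightarrow> real^'m^'n \<Rightarrow> bool" where
  "is_mp A X \<longleftrightarrow> A ** X ** A = A \<and> X ** A ** X = X \<and>
      transpose (A ** X) = A ** X \<and> transpose (X ** A) = X ** A"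

lemma mp_unique:
  assumes "is_mp A X" "is_mp A Y"
  shows "X = Y"
proof -
  have a1: "A ** X ** A = A" and a2: "X ** A ** X = X" and a3: "transpose (A ** X) = A ** X"
    and a4: "transpose (X ** A) = X ** A" using assms(1) unfolding is_mp_def by auto
  have b1: "A ** Y ** A = A" and b2: "Y ** A ** Y = Y" and b3: "transpose (A ** Y) = A ** Y"
    and b4: "transpose (Y ** A) = Y ** A" using assms(2) unfolding is_mp_def by auto
  have "X = X ** (A ** X)" using a2 by (simp add: matrix_mul_assoc)
  also have "\<dots> = X ** transpose (A ** X)" using a3 by simp
  also have "\<dots> = X ** transpose X ** transpose A" by (simp add: matrix_transpose_mul matrix_mul_assoc)
  also have "transpose A = transpose (A ** Y ** A)" using b1 by simp
  also have "\<dots> = transpose A ** transpose (A ** Y)" by (simp add: matrix_transpose_mul)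
  also have "X ** transpose X ** (transpose A ** transpose (A ** Y)) = X ** (transpose (A ** X)) ** transpose (A ** Y)"
    by (simp add: matrix_transpose_mul matrix_mul_assoc)
  also have "\<dots> = X ** A ** X ** A ** Y" using a3 b3 by (simp add: matrix_mul_assoc)
  also have "\<dots> = X ** A ** Y" using a2 by simp
  finally have X: "X = X ** A ** Y" .
  have "Y = (Y ** A) ** Y" using b2 by simp
  also have "\<dots> = transpose (Y ** A) ** Y" using b4 by simp
  also have "\<dots> = transpose A ** transpose Y ** Y" by (simp add: matrix_transpose_mul)
  also have "transpose A = transpose (A ** X ** A)" using a1 by simp
  also have "\<dots> = transpose (X ** A) ** transpose A" by (simp add: matrix_transpose_mul matrix_mul_assoc)
  also have "transpose (X ** A) ** transpose A ** transpose Y ** Y = transpose (X ** A) ** transpose (Y ** A) ** Y"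
    by (simp add: matrix_transpose_mul matrix_mul_assoc)
  also have "\<dots> = X ** A ** Y ** A ** Y" using a4 b4 by (simp add: matrix_mul_assoc)
  also have "\<dots> = X ** A ** Y" by (metis b2 matrix_mul_assoc)
  finally have Y: "Y = X ** A ** Y" .
  show ?thesis using X Y by simp
qed

lemma normal_solvable:
  fixes A :: "real^'n^'m"
  shows "\<exists>w. transpose A *v (A *v w) = transpose A *v z"
proof -
  let ?S = "range (\<lambda>w. A *v w)"
  obtain y r where y: "y \<in> Real_Vector_Spaces.span ?S" and r: "\<And>x. x \<in> Real_Vector_Spaces.span ?S \<Longrightarrow> orthogonal r x" and z: "z = y + r"
    using orthogonal_subspace_decomp_exists[of ?S z] by metis
  have sub: "Real_Vector_Spaces.subspace ?S"
    unfolding real_vector.subspace_def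
  proof (intro conjI ballI allI)
    show "0 \<in> ?S" by (metis matrix_vector_mult_0_right rangeI)
    fix x y assume "x \<in> ?S" "y \<in> ?S"
    then obtain a b where "x = A *v a" "y = A *v b" by auto
    then have "x + y = A *v (a + b)" by (simp add: matrix_vector_right_distrib)
    then show "x + y \<in> ?S" by auto
  next
    fix c x assume "x \<in> ?S"
    then obtain a where "x = A *v a" by auto
    then have "c *\<^sub>R x = A *v (c *\<^sub>R a)" by (simp add: matrix_vector_mult_scaleR)
    then show "c *\<^sub>R x \<in> ?S" by auto
  qed
  have "y \<in> ?S" using y sub by (metis real_vector.span_eq_iff)
  then obtain w where w: "y = A *v w" by blast
  have "transpose A *v r = 0"
  proof -
    have "(transpose A *v r) $ j = 0" for j
    proof -
      have "orthogonal r (A *v axis j 1)" by (rule r) (auto intro: real_vector.span_base)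
      then have "r \<bullet> (A *v axis j 1) = 0" by (simp add: real_inner_class.orthogonal_def)
      then show ?thesis
        by (simp add: matrix_vector_mult_def transpose_def inner_vec_def axis_def mult.commute
              if_distrib cong: if_cong)
    qed
    then show ?thesis by (simp add: Finite_Cartesian_Product.vec_eq_iff)
  qed
  then show ?thesis using z w by (auto simp: matrix_vector_right_distrib)
qed

lemma solve_matrix:
  fixes M :: "real^'n^'m" and N :: "real^'p^'m"
  assumes "\<And>z. \<exists>w. M *v w = N *v z"
  shows "\<exists>G. M ** G = N"
proof -
  define w where "w j = (SOME w. M *v w = N *v axis j 1)" for j
  have w: "M *v w j = N *v axis j 1" for j unfolding w_def by (rule someI_ex, rule assms)
  define G where "G = (\<chi> i j. w j $ i)"
  have "M ** G = N"
  proof -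
    have "(M ** G) $ i $ j = N $ i $ j" for i j
    proof -
      have "(M ** G) $ i $ j = (M *v w j) $ i"
        by (simp add: G_def matrix_matrix_mult_def matrix_vector_mult_def)
      also have "\<dots> = (N *v axis j 1) $ i" by (simp add: w)
      also have "\<dots> = N $ i $ j"
        by (simp add: matrix_vector_mult_def axis_def if_distrib cong: if_cong)
      finally show ?thesis .
    qed
    then show ?thesis by (simp add: Finite_Cartesian_Product.vec_eq_iff)
  qed
  then show ?thesis ..
qed

lemma proj_exists:
  fixes A :: "real^'n^'m"
  shows "\<exists>G. transpose A ** A ** G = transpose A"
proof -
  have "\<exists>G. (transpose A ** A) ** G = transpose A"
    by (rule solve_matrix) (metis matrix_vector_mul_assoc normal_solvable)
  then show ?thesis by simp
qed

lemma proj_props: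
  fixes A :: "real^'n^'m"
  assumes "transpose A ** A ** G = transpose A"
  shows "transpose (A ** G) = A ** G" "A ** G ** (A ** G) = A ** G" "A ** G ** A = A"
proof -
  let ?P = "A ** G"
  have "transpose ?P ** ?P = transpose G ** (transpose A ** A ** G)"
    by (simp add: matrix_transpose_mul matrix_mul_assoc)
  also have "\<dots> = transpose ?P" using assms by (simp add: matrix_transpose_mul)
  finally have e: "transpose ?P ** ?P = transpose ?P" .
  have "transpose (transpose ?P ** ?P) = transpose ?P ** ?P" by (simp add: matrix_transpose_mul)
  then have "transpose (transpose ?P) = transpose ?P" using e by simp
  then show s: "transpose ?P = ?P" by simp
  show "?P ** ?P = ?P" using e s by simp
  have "transpose (transpose A ** ?P) = transpose (transpose A)"
    using assms by (simp add: matrix_mul_assoc)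
  then have "transpose ?P ** A = A" by (simp add: matrix_transpose_mul)
  then show "?P ** A = A" using s by simp
qed

lemma mp_exists: "\<exists>X. is_mp (A::real^'n^'m) X"
proof -
  obtain G where G: "transpose A ** A ** G = transpose A" using proj_exists by blast
  obtain H where H: "transpose (transpose A) ** transpose A ** H = transpose (transpose A)"
    using proj_exists by blast
  note P = proj_props[OF G]
  note Q = proj_props[OF H]
  define Q where "Q = transpose A ** H"
  have Qs: "transpose Q = Q" using Q(1) by (simp add: Q_def)
  have Qi: "Q ** Q = Q" using Q(2) by (simp add: Q_def)
  have AQ: "A ** Q = A"
  proof -
    have "transpose (Q ** transpose A) = transpose (transpose A)" using Q(3) by (simp add: Q_def)
    then show ?thesis using Qs by (simp add: matrix_transpose_mul)
  qed
  have QH: "Q = transpose H ** A" using Qs unfolding Q_def by (metis matrix_transpose_mul Finite_Cartesian_Product.transpose_transpose)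
  define X where "X = Q ** G"
  have AX: "A ** X = A ** G" unfolding X_def by (simp add: matrix_mul_assoc AQ)
  have XA: "X ** A = Q"
  proof -
    have "Q ** (G ** A) = transpose H ** (A ** G ** A)" by (simp add: QH matrix_mul_assoc)
    also have "\<dots> = Q" using P(3) QH by simp
    finally show ?thesis by (simp add: X_def matrix_mul_assoc)
  qed
  have "is_mp A X" unfolding is_mp_def
  proof (intro conjI)
    show "A ** X ** A = A" using AX P(3) by simp
    show "X ** A ** X = X" using XA Qi by (simp add: X_def matrix_mul_assoc)
    show "transpose (A ** X) = A ** X" using AX P(1) by simp
    show "transpose (X ** A) = X ** A" using XA Qs by simp
  qed
  then show ?thesis ..
qed

lemma mp_is: "is_mp A (moore_penrose A)"
proof -
  obtain X where X: "is_mp A X" using mp_exists by blast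
  have "moore_penrose A = X" unfolding moore_penrose_def
    by (rule the_equality) (use X mp_unique in \<open>auto simp: is_mp_def\<close>)
  then show ?thesis using X by simp
qed

lemma mp1: "A ** moore_penrose A ** A = A" using mp_is unfolding is_mp_def by blast
lemma mp2: "moore_penrose A ** A ** moore_penrose A = moore_penrose A" using mp_is unfolding is_mp_def by blast
lemma mp3: "transpose (A ** moore_penrose A) = A ** moore_penrose A" using mp_is unfolding is_mp_def by blast
lemma mp4: "transpose (moore_penrose A ** A) = moore_penrose A ** A" using mp_is unfolding is_mp_def by blast

lemma sym_proj_eq:
  fixes P Q :: "real^'n^'n"
  assumes "transpose P = P" "transpose Q = Q" "P ** Q = Q" "Q ** P = P"
  shows "P = Q"
proof -
  have "transpose (Q ** P) = P ** Q" using assms(1,2) by (simp add: matrix_transpose_mul)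
  then have "transpose P = Q" using assms(3,4) by simp
  then show ?thesis using assms(1) by simp
qed

lemma range_sub:
  fixes A :: "real^'n^'m" and U :: "real^'k^'m"
  assumes "mat_range A \<subseteq> mat_range U"
  shows "U ** moore_penrose U ** A = A"
proof -
  have "(U ** moore_penrose U ** A) *v x = A *v x" for x
  proof -
    have "A *v x \<in> mat_range U" using assms by (auto simp: mat_range_def)
    then obtain y where y: "A *v x = U *v y" by (auto simp: mat_range_def)
    have "(U ** moore_penrose U ** A) *v x = (U ** moore_penrose U) *v (U *v y)"
      by (simp add: y matrix_vector_mul_assoc[symmetric])
    also have "\<dots> = (U ** moore_penrose U ** U) *v y" by (simp add: matrix_vector_mul_assoc)
    also have "\<dots> = A *v x" by (simp add: mp1 y)
    finally show ?thesis .
  qed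
  then show ?thesis by (simp add: matrix_eq)
qed

lemma null_sub:
  fixes A :: "real^'n^'m" and U :: "real^'n^'k"
  assumes "mat_null A \<subseteq> mat_null U"
  shows "U ** (moore_penrose A ** A) = U"
proof -
  have "(U ** (moore_penrose A ** A)) *v x = U *v x" for x
  proof -
    have "A *v (x - (moore_penrose A ** A) *v x) = 0"
      by (simp add: matrix_vector_mult_diff_distrib matrix_vector_mul_assoc matrix_mul_assoc mp1)
    then have "U *v (x - (moore_penrose A ** A) *v x) = 0" using assms by (auto simp: mat_null_def)
    then show ?thesis by (simp add: matrix_vector_mult_diff_distrib matrix_vector_mul_assoc)
  qed
  then show ?thesis by (simp add: matrix_eq)
qed

lemma proper_UU:
  assumes "proper_splitting A U V"
  shows "U ** moore_penrose U = A ** moore_penrose A"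
proof (rule sym_proj_eq)
  have r: "mat_range U = mat_range A" using assms by (simp add: proper_splitting_def)
  show "transpose (U ** moore_penrose U) = U ** moore_penrose U" by (rule mp3)
  show "transpose (A ** moore_penrose A) = A ** moore_penrose A" by (rule mp3)
  show "U ** moore_penrose U ** (A ** moore_penrose A) = A ** moore_penrose A"
    using range_sub[of A U] r by (simp add: matrix_mul_assoc)
  show "A ** moore_penrose A ** (U ** moore_penrose U) = U ** moore_penrose U"
    using range_sub[of U A] r by (simp add: matrix_mul_assoc)
qed

lemma proper_UU':
  assumes "proper_splitting A U V"
  shows "moore_penrose U ** U = moore_penrose A ** A"
proof -
  have r: "mat_null U = mat_null A" using assms by (simp add: proper_splitting_def)
  have 1: "moore_penrose U ** U ** (moore_penrose A ** A) = moore_penrose U ** U"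
    using null_sub[of A U] r by (simp add: matrix_mul_assoc[symmetric])
  have 2: "moore_penrose A ** A ** (moore_penrose U ** U) = moore_penrose A ** A"
    using null_sub[of U A] r by (simp add: matrix_mul_assoc[symmetric])
  have "transpose (moore_penrose U ** U ** (moore_penrose A ** A)) = moore_penrose A ** A ** (moore_penrose U ** U)"
    by (metis matrix_transpose_mul mp4)
  then have "moore_penrose A ** A = transpose (moore_penrose U ** U)" using 1 2 by simp
  then show ?thesis by (simp add: mp4)
qed

lemma proper_ident1:
  assumes "proper_splitting A U V"
  shows "moore_penrose A = moore_penrose U + (moore_penrose U ** V) ** moore_penrose A"
proof -
  have V: "V = U - A" using assms by (simp add: proper_splitting_def)
  have "(moore_penrose U ** V) ** moore_penrose A
      = moore_penrose U ** U ** moore_penrose A - moore_penrose U ** (A ** moore_penrose A)"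
    by (simp add: V mm_diff_l mm_diff_r matrix_mul_assoc)
  also have "moore_penrose U ** U ** moore_penrose A = moore_penrose A"
    using mp2[of A] by (simp add: proper_UU'[OF assms])
  also have "moore_penrose U ** (A ** moore_penrose A) = moore_penrose U"
    using mp2[of U] by (simp add: proper_UU[OF assms, symmetric] matrix_mul_assoc)
  finally show ?thesis by simp
qed

lemma proper_ident2:
  assumes "proper_splitting A U V"
  shows "moore_penrose A = moore_penrose U + moore_penrose A ** V ** moore_penrose U"
proof -
  have V: "V = U - A" using assms by (simp add: proper_splitting_def)
  have "moore_penrose A ** V ** moore_penrose U
      = moore_penrose A ** (U ** moore_penrose U) - moore_penrose A ** A ** moore_penrose U"
    by (simp add: V mm_diff_l mm_diff_r matrix_mul_assoc)
  also have "moore_penrose A ** (U ** moore_penrose U) = moore_penrose A"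
    using mp2[of A] by (simp add: proper_UU[OF assms] matrix_mul_assoc)
  also have "moore_penrose A ** A ** moore_penrose U = moore_penrose U"
    using mp2[of U] by (simp add: proper_UU'[OF assms, symmetric])
  finally show ?thesis by simp
qed




primrec mpow :: "'a::semiring_1^'n^'n \<Rightarrow> nat \<Rightarrow> 'a^'n^'n" where
  "mpow M 0 = Finite_Cartesian_Product.mat 1"
| "mpow M (Suc k) = mpow M k ** M"

locale bij_idx =
  fixes g :: "nat \<Rightarrow> 'n::finite"
  assumes bij: "bij_betw g {0..<CARD('n)} UNIV"
begin

definition tm :: "'a::comm_ring_1^'n^'n \<Rightarrow> 'a Matrix.mat" where
  "tm M = Matrix.mat CARD('n) CARD('n) (\<lambda>(i,j). M $ g i $ g j)"
definition tv :: "'a::comm_ring_1^'n \<Rightarrow> 'a Matrix.vec" where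
  "tv v = Matrix.vec CARD('n) (\<lambda>i. v $ g i)"
definition h :: "'n \<Rightarrow> nat" where "h = inv_into {0..<CARD('n)} g"

lemma h_lt: "h k < CARD('n)"
  unfolding h_def using bij by (metis UNIV_I atLeastLessThan_iff bij_betw_def inv_into_into)
lemma g_h: "g (h k) = k"
  unfolding h_def using bij by (simp add: bij_betw_def f_inv_into_f)
lemma h_g: "i < CARD('n) \<Longrightarrow> h (g i) = i"
  unfolding h_def using bij by (simp add: bij_betw_def inv_into_f_f)

lemma sum_re: "(\<Sum>k\<in>UNIV. f k) = (\<Sum>i\<in>{0..<CARD('n)}. f (g i))"
  using sum.reindex_bij_betw[OF bij, of f] by simp

lemma tm_carrier[simp]: "tm M \<in> carrier_mat CARD('n) CARD('n)"
  by (simp add: tm_def)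
lemma tm_dims[simp]: "dim_row (tm M) = CARD('n)" "dim_col (tm M) = CARD('n)"
  by (simp_all add: tm_def)
lemma tm_index[simp]: "i < CARD('n) \<Longrightarrow> j < CARD('n) \<Longrightarrow> tm M $$ (i,j) = M $ g i $ g j"
  by (simp add: tm_def)
lemma tv_dim[simp]: "dim_vec (tv v) = CARD('n)" by (simp add: tv_def)
lemma tv_index[simp]: "i < CARD('n) \<Longrightarrow> vec_index (tv v) i = v $ g i" by (simp add: tv_def)

lemma tm_mult: "tm (M ** M') = tm M * tm M'"
proof (rule eq_matI)
  fix i j assume i: "i < dim_row (tm M * tm M')" and j: "j < dim_col (tm M * tm M')"
  then have i': "i < CARD('n)" and j': "j < CARD('n)" by auto
  have "(tm M * tm M') $$ (i,j) = (\<Sum>l\<in>{0..<CARD('n)}. M $ g i $ g l * M' $ g l $ g j)"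
    using i' j' by (simp add: scalar_prod_def)
  also have "\<dots> = (M ** M') $ g i $ g j"
    by (simp add: matrix_matrix_mult_def sum_re)
  finally show "tm (M ** M') $$ (i,j) = (tm M * tm M') $$ (i,j)" using i' j' by simp
qed auto

lemma tm_one: "tm (Finite_Cartesian_Product.mat 1) = 1\<^sub>m CARD('n)"
proof (rule eq_matI)
  fix i j assume "i < dim_row (1\<^sub>m CARD('n) :: 'a mat)" "j < dim_col (1\<^sub>m CARD('n) :: 'a mat)"
  then have i: "i < CARD('n)" and j: "j < CARD('n)" by auto
  have "g i = g j \<longleftrightarrow> i = j" using i j h_g by metis
  then show "tm (Finite_Cartesian_Product.mat 1 :: 'a::comm_ring_1^'n^'n) $$ (i, j) = 1\<^sub>m CARD('n) $$ (i, j)"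
    using i j by (simp add: Finite_Cartesian_Product.mat_def)
qed auto

lemma tm_pow: "tm (mpow M k) = tm M ^\<^sub>m k"
  by (induction k) (simp_all add: tm_one tm_mult)

lemma tm_mv: "tm M *\<^sub>v tv v = tv (M *v v)"
proof (rule eq_vecI)
  fix i assume "i < dim_vec (tv (M *v v))"
  then have i: "i < CARD('n)" by simp
  have "vec_index (tm M *\<^sub>v tv v) i = (\<Sum>l\<in>{0..<CARD('n)}. M $ g i $ g l * v $ g l)"
    using i by (simp add: scalar_prod_def)
  also have "\<dots> = (M *v v) $ g i" by (simp add: matrix_vector_mult_def sum_re)
  finally show "vec_index (tm M *\<^sub>v tv v) i = vec_index (tv (M *v v)) i" using i by simp
qed simp

lemma tv_zero: "tv v = 0\<^sub>v CARD('n) \<longleftrightarrow> v = 0"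
proof
  assume "tv v = 0\<^sub>v CARD('n)"
  then have "v $ g (h k) = 0" for k using h_lt[of k]
    by (metis index_zero_vec(1) tv_index)
  then show "v = 0" by (simp add: Finite_Cartesian_Product.vec_eq_iff g_h)
qed (simp add: tv_def zero_vec_def)

lemma tv_inj: "tv a = tv b \<Longrightarrow> a = b"
proof -
  assume e: "tv a = tv b"
  have "a $ k = b $ k" for k
  proof -
    have "vec_index (tv a) (h k) = vec_index (tv b) (h k)" using e by simp
    then show ?thesis using h_lt[of k] by (simp add: g_h)
  qed
  then show "a = b" by (simp add: Finite_Cartesian_Product.vec_eq_iff)
qed

lemma tv_smult: "tv (c *s v) = c \<cdot>\<^sub>v tv v"
  by (rule eq_vecI) auto

lemma tv_surj: "w \<in> carrier_vec CARD('n) \<Longrightarrow> w = tv (\<chi> k. vec_index w (h k))"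
  by (rule eq_vecI) (auto simp: h_g)

lemma eig_to:
  fixes M :: "'a::field^'n^'n"
  assumes v1: "v \<noteq> 0" and v2: "M *v v = l *s v"
  shows "eigenvalue (tm M) l"
proof -
  have c: "tv v \<in> carrier_vec CARD('n)" by (rule carrier_vecI) (rule tv_dim)
  have z: "tv v \<noteq> 0\<^sub>v CARD('n)" using v1 tv_zero by blast
  have e: "tm M *\<^sub>v tv v = l \<cdot>\<^sub>v tv v" unfolding tm_mv v2 tv_smult ..
  have "eigenvector (tm M) (tv v) l"
    unfolding eigenvector_def tm_dims using c z e by blast
  then show "eigenvalue (tm M) l" unfolding eigenvalue_def by blast
qed

lemma eig_from:
  fixes M :: "'a::field^'n^'n"
  assumes "eigenvalue (tm M) l"
  shows "\<exists>v. v \<noteq> 0 \<and> M *v v = l *s v"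
proof -
  from assms obtain w where w: "eigenvector (tm M) w l" unfolding eigenvalue_def by blast
  then have wc: "w \<in> carrier_vec CARD('n)" and wz: "w \<noteq> 0\<^sub>v CARD('n)" and we: "tm M *\<^sub>v w = l \<cdot>\<^sub>v w"
    unfolding eigenvector_def by auto
  define v where "v = (\<chi> k. vec_index w (h k))"
  have wv: "w = tv v" using tv_surj[OF wc] by (simp add: v_def)
  have "v \<noteq> 0" using wz wv tv_zero by auto
  moreover have "tv (M *v v) = tv (l *s v)" using we wv by (simp add: tm_mv tv_smult)
  then have "M *v v = l *s v" by (rule tv_inj)
  ultimately show ?thesis by blast
qed

lemma tm_transpose: "tm (transpose M) = transpose_mat (tm M)"
  by (rule eq_matI) (auto simp: transpose_def)

end


definition evs :: "complex^'n^'n \<Rightarrow> complex set" where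
  "evs M = {l. \<exists>v. v \<noteq> 0 \<and> M *v v = l *s v}"

lemma ex_bij_idx: "\<exists>g::nat \<Rightarrow> 'n::finite. bij_idx g"
proof -
  obtain g where "bij_betw g {0..<card (UNIV::'n set)} (UNIV::'n set)"
    using ex_bij_betw_nat_finite[of "UNIV::'n set"] by auto
  then have "bij_idx g" by unfold_locales simp
  then show ?thesis by blast
qed

lemma evs_spectrum: "bij_idx g \<Longrightarrow> evs M = spectrum (bij_idx.tm g M)"
  unfolding evs_def spectrum_def using bij_idx.eig_to bij_idx.eig_from by blast

lemma evs_finite: "finite (evs M)"
proof -
  obtain g :: "nat \<Rightarrow> 'a" where g: "bij_idx g" using ex_bij_idx by blast
  show ?thesis unfolding evs_spectrum[OF g]
    by (rule card_finite_spectrum(1)[OF bij_idx.tm_carrier[OF g]])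
qed

lemma evs_nonempty: "evs M \<noteq> {}"
proof -
  obtain g :: "nat \<Rightarrow> 'a" where g: "bij_idx g" using ex_bij_idx by blast
  show ?thesis unfolding evs_spectrum[OF g]
    by (rule spectrum_non_empty[OF bij_idx.tm_carrier[OF g]]) simp
qed

lemma evs_transpose: "l \<in> evs M \<Longrightarrow> l \<in> evs (transpose M)"
proof -
  assume l: "l \<in> evs M"
  obtain g :: "nat \<Rightarrow> 'a" where g: "bij_idx g" using ex_bij_idx by blast
  have c: "bij_idx.tm g M \<in> carrier_mat CARD('a) CARD('a)" by (rule bij_idx.tm_carrier[OF g])
  have "eigenvalue (bij_idx.tm g M) l" using l evs_spectrum[OF g] by (simp add: spectrum_def)
  then have "poly (char_poly (bij_idx.tm g M)) l = 0" using eigenvalue_root_char_poly[OF c] by simp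
  then have "poly (char_poly (transpose_mat (bij_idx.tm g M))) l = 0" using char_poly_transpose_mat[OF c] by simp
  then have "eigenvalue (transpose_mat (bij_idx.tm g M)) l"
    using eigenvalue_root_char_poly[of "transpose_mat (bij_idx.tm g M)" "CARD('a)"] c by simp
  then show ?thesis using evs_spectrum[OF g, of "transpose M"] bij_idx.tm_transpose[OF g, of M]
    by (simp add: spectrum_def)
qed

lemma evs_pow_bound:
  assumes "\<And>l. l \<in> evs M \<Longrightarrow> cmod l < 1"
  shows "\<exists>c. \<forall>k i j. cmod (mpow M k $ i $ j) \<le> c"
proof -
  obtain g :: "nat \<Rightarrow> 'a" where g: "bij_idx g" using ex_bij_idx by blast
  interpret bij_idx g by (rule g)
  have n: "CARD('a) > 0" by simp
  have "Spectral_Radius.spectral_radius (tm M) \<in> norm ` spectrum (tm M)"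
    by (rule spectral_radius_mem_max(1)[OF tm_carrier n])
  then have "Spectral_Radius.spectral_radius (tm M) < 1"
    using assms evs_spectrum[OF g] by auto
  from spectral_radius_jnf_norm_bound_less_1_upper_triangular[OF tm_carrier this]
  obtain c where c: "\<And>k. norm_bound (tm M ^\<^sub>m k) c" by blast
  have "cmod (mpow M k $ i $ j) \<le> c" for k i j
  proof -
    have "mpow M k $ i $ j = tm (mpow M k) $$ (h i, h j)" using h_lt by (simp add: g_h)
    also have "\<dots> = (tm M ^\<^sub>m k) $$ (h i, h j)" by (simp add: tm_pow)
    finally have e: "mpow M k $ i $ j = (tm M ^\<^sub>m k) $$ (h i, h j)" .
    have "dim_row (tm M ^\<^sub>m k) = CARD('a)" "dim_col (tm M ^\<^sub>m k) = CARD('a)"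
      by (simp_all add: tm_pow[symmetric])
    then show ?thesis using c[of k] h_lt[of i] h_lt[of j] e unfolding norm_bound_def by auto
  qed
  then show ?thesis by blast
qed





definition nn :: "real^'n^'m \<Rightarrow> bool" where "nn X \<longleftrightarrow> (\<forall>i j. 0 \<le> X $ i $ j)"

lemma mat_nonneg_nn: "mat_nonneg X \<Longrightarrow> nn X"
  by (simp add: mat_nonneg_def nn_def)

lemma nn_mult: "nn X \<Longrightarrow> nn Y \<Longrightarrow> nn (X ** Y)"
  unfolding nn_def matrix_matrix_mult_def by (auto intro!: sum_nonneg)

lemma complexify_mult: "complexify (A ** B) = complexify A ** complexify B"
  by (simp add: complexify_def matrix_matrix_mult_def Finite_Cartesian_Product.vec_eq_iff)

lemma complexify_one: "complexify (Finite_Cartesian_Product.mat 1 :: real^'n^'n) = Finite_Cartesian_Product.mat 1"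
  by (simp add: complexify_def Finite_Cartesian_Product.mat_def Finite_Cartesian_Product.vec_eq_iff)

lemma complexify_mpow: "complexify (mpow T k) = mpow (complexify T) k"
  by (induction k) (simp_all add: complexify_one complexify_mult)

lemma complexify_transpose: "complexify (transpose T) = transpose (complexify T)"
  by (simp add: complexify_def transpose_def Finite_Cartesian_Product.vec_eq_iff)

lemma mv_scale: "(M::'a::comm_ring_1^'n^'m) *v (c *s v) = c *s (M *v v)"
  by (simp add: matrix_vector_mult_def Finite_Cartesian_Product.vec_eq_iff sum_distrib_left mult_ac)

lemma mpow_eig: "(M::'a::comm_ring_1^'n^'n) *v v = l *s v \<Longrightarrow> mpow M k *v v = l ^ k *s v"
proof (induction k)
  case 0 then show ?case by simp
next
  case (Suc k)
  have "mpow M (Suc k) *v v = mpow M k *v (M *v v)" by (simp add: matrix_vector_mul_assoc)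
  also have "\<dots> = l *s (mpow M k *v v)" using Suc.prems by (simp add: mv_scale)
  also have "\<dots> = l ^ Suc k *s v" using Suc by (simp add: mult.commute)
  finally show ?case .
qed

lemma norm_mv_le:
  assumes "nn P"
  shows "cmod ((complexify P *v v) $ i) \<le> (\<Sum>j\<in>UNIV. P $ i $ j * cmod (v $ j))"
proof -
  have "cmod ((complexify P *v v) $ i) = cmod (\<Sum>j\<in>UNIV. complex_of_real (P $ i $ j) * v $ j)"
    by (simp add: matrix_vector_mult_def complexify_def)
  also have "\<dots> \<le> (\<Sum>j\<in>UNIV. cmod (complex_of_real (P $ i $ j) * v $ j))" by (rule norm_sum)
  also have "\<dots> = (\<Sum>j\<in>UNIV. P $ i $ j * cmod (v $ j))"
    using assms by (simp add: nn_def norm_mult)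
  finally show ?thesis .
qed

lemma sr_set: "{cmod l | l. \<exists>v. v \<noteq> 0 \<and> complexify M *v v = l *s v} = cmod ` evs (complexify M)"
  by (auto simp: evs_def)

lemma sr_ge: "l \<in> evs (complexify M) \<Longrightarrow> cmod l \<le> Defs.spectral_radius M"
  unfolding Defs.spectral_radius_def sr_set by (rule Max_ge) (auto simp: evs_finite)

lemma sr_att: "\<exists>l \<in> evs (complexify M). cmod l = Defs.spectral_radius M"
proof -
  have "Max (cmod ` evs (complexify M)) \<in> cmod ` evs (complexify M)"
    by (rule Max_in) (auto simp: evs_finite evs_nonempty)
  then show ?thesis unfolding Defs.spectral_radius_def sr_set by auto
qed

lemma sr_nonneg: "0 \<le> Defs.spectral_radius M"
  using sr_att[of M] by (metis norm_ge_zero)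


lemma nn_one: "nn (Finite_Cartesian_Product.mat 1 :: real^'n^'n)"
  by (simp add: nn_def Finite_Cartesian_Product.mat_def)

lemma nn_mpow: "nn T \<Longrightarrow> nn (mpow T k)"
  by (induction k) (simp_all add: nn_one nn_mult)

lemma mv_nonneg: "nn M \<Longrightarrow> (\<forall>j. 0 \<le> x $ j) \<Longrightarrow> 0 \<le> (M *v x) $ i"
  unfolding nn_def matrix_vector_mult_def by (auto intro!: sum_nonneg)

lemma sum_vec_comp: "(\<Sum>k\<in>S. f k) $ i = (\<Sum>k\<in>S. f k $ i)"
  by (rule sum_component)

lemma decomp:
  fixes T :: "real^'n^'n"
  assumes "a = u + T *v a"
  shows "a = (\<Sum>k<N. mpow T k *v u) + mpow T N *v a"
proof (induction N)
  case 0 then show ?case by simp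
next
  case (Suc N)
  have "mpow T N *v a = mpow T N *v u + mpow T (Suc N) *v a"
    by (subst assms) (simp add: matrix_vector_right_distrib matrix_vector_mul_assoc)
  then show ?case using Suc by (simp add: add.assoc)
qed

lemma rowsum_lt1:
  fixes T :: "real^'n^'n" and Ap Up :: "real^'m^'n"
  assumes nT: "nn T" and nA: "nn Ap" and nU: "nn Up"
    and id: "Ap = Up + T ** Ap"
    and rs: "\<forall>i. (\<Sum>j\<in>UNIV. Up$i$j) > 0"
    and l: "l \<in> evs (complexify T)"
  shows "cmod l < 1"
proof (rule ccontr)
  assume "\<not> cmod l < 1"
  then have l1: "1 \<le> cmod l" by simp
  define one :: "real^'m" where "one = (\<chi> j. 1)"
  define u where "u = Up *v one"
  define a where "a = Ap *v one"
  have u_pos: "u $ i > 0" for i using rs by (simp add: u_def one_def matrix_vector_mult_def)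
  have one_nn: "\<forall>j. 0 \<le> one $ j" by (simp add: one_def)
  have a_nn: "0 \<le> a $ i" for i unfolding a_def by (rule mv_nonneg[OF nA one_nn])
  have u_nn: "\<forall>j. 0 \<le> u $ j" using u_pos less_imp_le by blast
  have aeq: "a = u + T *v a"
    unfolding a_def u_def by (subst id) (simp add: matrix_vector_mult_add_rdistrib matrix_vector_mul_assoc)
  define \<delta> where "\<delta> = Min (range (\<lambda>j. u $ j))"
  have \<delta>_le: "\<delta> \<le> u $ j" for j unfolding \<delta>_def by (rule Min_le) auto
  have "\<delta> \<in> range (\<lambda>j. u $ j)" unfolding \<delta>_def by (rule Min_in) auto
  then have \<delta>_pos: "\<delta> > 0" using u_pos by auto
  from l obtain v where v0: "v \<noteq> 0" and ev: "complexify T *v v = l *s v" by (auto simp: evs_def)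
  define m where "m = Max (range (\<lambda>j. cmod (v $ j)))"
  have m_ge: "cmod (v $ j) \<le> m" for j unfolding m_def by (rule Max_ge) auto
  have "m \<in> range (\<lambda>j. cmod (v $ j))" unfolding m_def by (rule Max_in) auto
  then obtain i0 where i0: "m = cmod (v $ i0)" by auto
  have "m > 0"
  proof -
    obtain j where "v $ j \<noteq> 0" using v0 by (auto simp: Finite_Cartesian_Product.vec_eq_iff)
    then have "cmod (v $ j) > 0" by simp
    then show ?thesis using m_ge[of j] by linarith
  qed
  define P where "P k = mpow T k" for k
  have P_nn: "nn (P k)" for k unfolding P_def by (rule nn_mpow[OF nT])
  have bound: "cmod l ^ k \<le> (P k *v u) $ i0 / \<delta>" for k
  proof -
    have "cmod l ^ k * m = cmod ((l ^ k *s v) $ i0)" using i0 by (simp add: norm_mult norm_power)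
    also have "l ^ k *s v = complexify (P k) *v v"
      using mpow_eig[OF ev, of k] by (simp add: P_def complexify_mpow)
    also have "cmod ((complexify (P k) *v v) $ i0) \<le> (\<Sum>j\<in>UNIV. P k $ i0 $ j * cmod (v $ j))"
      by (rule norm_mv_le[OF P_nn])
    also have "\<dots> \<le> (\<Sum>j\<in>UNIV. P k $ i0 $ j * m)"
      using P_nn m_ge by (auto simp: nn_def intro!: sum_mono mult_left_mono)
    finally have 1: "cmod l ^ k \<le> (\<Sum>j\<in>UNIV. P k $ i0 $ j)"
      using \<open>m > 0\<close> by (simp add: sum_distrib_right[symmetric])
    have "(\<Sum>j\<in>UNIV. P k $ i0 $ j) * \<delta> = (\<Sum>j\<in>UNIV. P k $ i0 $ j * \<delta>)"
      by (simp add: sum_distrib_right)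
    also have "\<dots> \<le> (\<Sum>j\<in>UNIV. P k $ i0 $ j * u $ j)"
      using P_nn \<delta>_le by (auto simp: nn_def intro!: sum_mono mult_left_mono)
    also have "\<dots> = (P k *v u) $ i0" by (simp add: matrix_vector_mult_def)
    finally have "(\<Sum>j\<in>UNIV. P k $ i0 $ j) \<le> (P k *v u) $ i0 / \<delta>"
      using \<delta>_pos by (simp add: field_simps)
    then show ?thesis using 1 by linarith
  qed
  have sumb: "(\<Sum>k<N. cmod l ^ k) \<le> a $ i0 / \<delta>" for N
  proof -
    have "(\<Sum>k<N. cmod l ^ k) \<le> (\<Sum>k<N. (P k *v u) $ i0 / \<delta>)" by (rule sum_mono) (rule bound)
    also have "\<dots> = (\<Sum>k<N. (P k *v u) $ i0) / \<delta>" by (simp add: sum_divide_distrib)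
    also have "(\<Sum>k<N. (P k *v u) $ i0) \<le> a $ i0"
    proof -
      have "a $ i0 = (\<Sum>k<N. (P k *v u) $ i0) + (P N *v a) $ i0"
        using arg_cong[OF decomp[OF aeq, of N], of "\<lambda>x. x $ i0"] by (simp add: P_def sum_vec_comp)
      moreover have "0 \<le> (P N *v a) $ i0" using a_nn by (intro mv_nonneg[OF P_nn]) auto
      ultimately show ?thesis by linarith
    qed
    then have "(\<Sum>k<N. (P k *v u) $ i0) / \<delta> \<le> a $ i0 / \<delta>" using \<delta>_pos by (simp add: divide_right_mono)
    finally show ?thesis .
  qed
  have "real N \<le> (\<Sum>k<N. cmod l ^ k)" for N
  proof -
    have "(\<Sum>k<N. (1::real)) \<le> (\<Sum>k<N. cmod l ^ k)" using l1 by (intro sum_mono one_le_power) auto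
    then show ?thesis by simp
  qed
  then have "real N \<le> a $ i0 / \<delta>" for N using sumb order_trans by blast
  moreover obtain N :: nat where "a $ i0 / \<delta> < real N" using reals_Archimedean2 by blast
  ultimately show False by (meson not_less)
qed


lemma vm_comp: "(x v* M) $ j = (\<Sum>i\<in>UNIV. x $ i * M $ i $ j)"
  by (simp add: vector_matrix_mult_def)

lemma cw_lower:
  fixes S :: "real^'n^'n" and w :: "real^'n"
  assumes nS: "nn S" and wnn: "\<forall>i. 0 \<le> w $ i" and wpos: "w $ j0 > 0" and \<alpha>: "\<alpha> > 0"
    and sub: "\<forall>j. \<alpha> * w $ j \<le> (w v* S) $ j"
  shows "\<alpha> \<le> Defs.spectral_radius S"
proof (rule ccontr)
  let ?\<rho> = "Defs.spectral_radius S"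
  assume "\<not> \<alpha> \<le> ?\<rho>"
  then have lt: "?\<rho> < \<alpha>" by simp
  define \<beta> where "\<beta> = (?\<rho> + \<alpha>) / 2"
  have \<rho>0: "0 \<le> ?\<rho>" by (rule sr_nonneg)
  have \<beta>pos: "\<beta> > 0" and \<beta>1: "?\<rho> < \<beta>" and \<beta>2: "\<beta> < \<alpha>" using \<rho>0 lt by (auto simp: \<beta>_def)
  define S' where "S' = (1 / \<beta>) *\<^sub>R S"
  have S'_ent: "S' $ i $ j = S $ i $ j / \<beta>" for i j by (simp add: S'_def)
  have nS': "nn S'" using nS \<beta>pos by (simp add: nn_def S'_ent)
  have evs_lt: "cmod l < 1" if l: "l \<in> evs (complexify S')" for l
  proof -
    from l obtain v where v0: "v \<noteq> 0" and ev: "complexify S' *v v = l *s v" by (auto simp: evs_def)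
    have "complexify S *v v = complex_of_real \<beta> *s (complexify S' *v v)"
      using \<beta>pos by (simp add: Finite_Cartesian_Product.vec_eq_iff matrix_vector_mult_def complexify_def
          S'_ent sum_distrib_left mult_ac)
    also have "\<dots> = (complex_of_real \<beta> * l) *s v" by (simp add: ev vector_smult_assoc)
    finally have "complex_of_real \<beta> * l \<in> evs (complexify S)" using v0 by (auto simp: evs_def)
    then have "cmod (complex_of_real \<beta> * l) \<le> ?\<rho>" by (rule sr_ge)
    then have "\<beta> * cmod l \<le> ?\<rho>" using \<beta>pos by (simp add: norm_mult)
    then have "\<beta> * cmod l < \<beta> * 1" using \<beta>1 by simp
    then show ?thesis using \<beta>pos by (simp only: mult_less_cancel_left_pos)
  qed
  obtain c where c: "\<forall>k i j. cmod (mpow (complexify S') k $ i $ j) \<le> c"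
    using evs_pow_bound[OF evs_lt] by blast
  have cb: "\<bar>mpow S' k $ i $ j\<bar> \<le> c" for k i j
  proof -
    have "complexify (mpow S' k) $ i $ j = complex_of_real (mpow S' k $ i $ j)" by (simp add: complexify_def)
    then show ?thesis using c[rule_format, of k i j] by (simp add: complexify_mpow)
  qed
  define r where "r = \<alpha> / \<beta>"
  have r1: "r > 1" using \<beta>pos \<beta>2 by (simp add: r_def)
  have grow: "r ^ k * w $ j \<le> (w v* mpow S' k) $ j" for k j
  proof (induction k arbitrary: j)
    case 0 then show ?case by simp
  next
    case (Suc k)
    have "r ^ Suc k * w $ j = r ^ k * (\<alpha> * w $ j / \<beta>)" by (simp add: r_def)
    also have "\<dots> \<le> r ^ k * ((w v* S) $ j / \<beta>)"
      using sub \<beta>pos r1 by (intro mult_left_mono divide_right_mono) auto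
    also have "\<dots> = (\<Sum>i\<in>UNIV. (r ^ k * w $ i) * S' $ i $ j)"
      by (simp add: vm_comp S'_ent sum_distrib_left sum_divide_distrib mult_ac)
    also have "\<dots> \<le> (\<Sum>i\<in>UNIV. (w v* mpow S' k) $ i * S' $ i $ j)"
      using nS' Suc.IH by (auto simp: nn_def intro!: sum_mono mult_right_mono)
    also have "\<dots> = (w v* mpow S' (Suc k)) $ j"
      by (simp add: vm_comp[of "w v* mpow S' k"] vector_matrix_mul_assoc[symmetric])
    finally show ?case .
  qed
  define W where "W = (\<Sum>i\<in>UNIV. w $ i)"
  have bnd: "r ^ k * w $ j0 \<le> c * W" for k
  proof -
    have "(w v* mpow S' k) $ j0 \<le> (\<Sum>i\<in>UNIV. w $ i * c)"
      unfolding vm_comp using wnn cb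
      by (intro sum_mono mult_left_mono) (auto simp: abs_le_iff)
    also have "(\<Sum>i\<in>UNIV. w $ i * c) = c * W" unfolding W_def by (simp add: sum_distrib_left mult.commute)
    finally show ?thesis using grow[of k j0] by linarith
  qed
  obtain k where "c * W / w $ j0 < r ^ k" using real_arch_pow[OF r1] by blast
  then have "c * W < r ^ k * w $ j0" using wpos by (simp add: divide_less_eq)
  with bnd[of k] show False by linarith
qed


lemma vm_add_right: "(x::real^'m) v* (M + N) = x v* M + x v* N"
  by (simp add: Finite_Cartesian_Product.vec_eq_iff vm_comp sum.distrib distrib_left)

lemma nn_transpose: "nn T \<Longrightarrow> nn (transpose T)"
  by (simp add: nn_def transpose_def)

lemma vm_mono:
  assumes "nn M" "\<forall>i. x $ i \<le> y $ i"
  shows "(x v* M) $ j \<le> (y v* M) $ j"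
  unfolding vm_comp using assms by (auto simp: nn_def intro!: sum_mono mult_right_mono)

lemma vm_nonneg:
  assumes "nn M" "\<forall>i. 0 \<le> x $ i"
  shows "0 \<le> (x v* M) $ j"
  unfolding vm_comp using assms by (auto simp: nn_def intro!: sum_nonneg)

lemma vm_scale: "((c::real) *s x) v* M = c *s (x v* M)"
  by (simp add: Finite_Cartesian_Product.vec_eq_iff vm_comp sum_distrib_left mult_ac)

theorem theorem3p10:
  fixes A B C U V :: "real^'n^'m"
  assumes "mat_nonneg (moore_penrose A)"
    and "proper_weak_regular_splitting A B C"
    and "proper_regular_splitting A U V"
    and "mat_ge (moore_penrose B) (moore_penrose U)"
    and "\<forall>i. (\<Sum>j\<in>UNIV. (moore_penrose U)$i$j) > 0"
  shows "Defs.spectral_radius (moore_penrose B ** C) \<le> Defs.spectral_radius (moore_penrose U ** V)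
       \<and> Defs.spectral_radius (moore_penrose U ** V) < 1"
proof -
  define Ap where "Ap = moore_penrose A"
  define Bp where "Bp = moore_penrose B"
  define Up where "Up = moore_penrose U"
  define T1 where "T1 = Bp ** C"
  define T2 where "T2 = Up ** V"
  have nA: "nn Ap" using assms(1) by (simp add: Ap_def mat_nonneg_nn)
  have psB: "proper_splitting A B C" and nB: "nn Bp" and nT1: "nn T1"
    using assms(2) by (auto simp: proper_weak_regular_splitting_def Bp_def T1_def mat_nonneg_nn)
  have psU: "proper_splitting A U V" and nU: "nn Up" and nV: "nn V"
    using assms(3) by (auto simp: proper_regular_splitting_def Up_def mat_nonneg_nn)
  have nBU: "Up $ i $ j \<le> Bp $ i $ j" for i j
    using assms(4) by (auto simp: mat_ge_def mat_nonneg_def Up_def Bp_def)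
  have nT2: "nn T2" unfolding T2_def by (rule nn_mult[OF nU nV])
  let ?\<rho>1 = "Defs.spectral_radius T1"
  let ?\<rho>2 = "Defs.spectral_radius T2"
  have idU1: "Ap = Up + T2 ** Ap" using proper_ident1[OF psU] by (simp add: Ap_def Up_def T2_def)
  have idU2: "Ap = Up + Ap ** V ** Up" using proper_ident2[OF psU] by (simp add: Ap_def Up_def)
  have idB1: "Ap = Bp + T1 ** Ap" using proper_ident1[OF psB] by (simp add: Ap_def Bp_def T1_def)
  have part2: "?\<rho>2 < 1"
  proof -
    obtain l where l: "l \<in> evs (complexify T2)" "cmod l = ?\<rho>2" using sr_att by blast
    have "cmod l < 1"
      by (rule rowsum_lt1[OF nT2 nA nU idU1 _ l(1)]) (use assms(5) in \<open>simp add: Up_def\<close>)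
    then show ?thesis using l(2) by simp
  qed
  have part1: "?\<rho>1 \<le> ?\<rho>2"
  proof (cases "?\<rho>1 = 0")
    case True then show ?thesis using sr_nonneg[of T2] by simp
  next
    case False
    then have \<rho>1pos: "?\<rho>1 > 0" using sr_nonneg[of T1] by simp
    obtain \<mu> where \<mu>: "\<mu> \<in> evs (complexify T1)" "cmod \<mu> = ?\<rho>1" using sr_att by blast
    have "\<mu> \<in> evs (transpose (complexify T1))" by (rule evs_transpose[OF \<mu>(1)])
    then obtain v where v0: "v \<noteq> 0" and ev: "complexify (transpose T1) *v v = \<mu> *s v"
      by (auto simp: evs_def complexify_transpose)
    define y where "y = (\<chi> i. cmod (v $ i))"
    have ynn: "\<forall>i. 0 \<le> y $ i" by (simp add: y_def)
    obtain i0 where i0: "y $ i0 > 0"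
    proof -
      obtain i where "v $ i \<noteq> 0" using v0 by (auto simp: Finite_Cartesian_Product.vec_eq_iff)
      then show ?thesis using that[of i] by (simp add: y_def)
    qed
    have key: "?\<rho>1 * y $ j \<le> (y v* T1) $ j" for j
    proof -
      have "?\<rho>1 * y $ j = cmod ((complexify (transpose T1) *v v) $ j)"
        using \<mu>(2) by (simp add: ev y_def norm_mult)
      also have "\<dots> \<le> (\<Sum>i\<in>UNIV. transpose T1 $ j $ i * cmod (v $ i))"
        by (rule norm_mv_le[OF nn_transpose[OF nT1]])
      also have "\<dots> = (y v* T1) $ j" by (simp add: vm_comp transpose_def y_def mult.commute)
      finally show ?thesis .
    qed
    define b where "b = y v* Bp"
    have bnn: "\<forall>j. 0 \<le> b $ j" unfolding b_def using vm_nonneg[OF nB ynn] by blast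
    obtain j1 where j1: "b $ j1 > 0"
    proof (rule ccontr)
      assume "\<not> thesis"
      then have "\<forall>j. b $ j \<le> 0" using that by (meson not_less)
      then have "b = 0" using bnn by (auto simp: Finite_Cartesian_Product.vec_eq_iff intro: antisym)
      then have "y v* T1 = 0" by (simp add: T1_def b_def vector_matrix_mul_assoc[symmetric])
      then have "?\<rho>1 * y $ i0 \<le> 0" using key[of i0] by simp
      then show False using \<rho>1pos i0 by (simp add: mult_le_0_iff)
    qed
    define z where "z = y v* Ap"
    have znn: "\<forall>j. 0 \<le> z $ j" unfolding z_def using vm_nonneg[OF nA ynn] by blast
    have zeq: "z = b + (y v* T1) v* Ap"
      unfolding z_def b_def by (subst idB1) (simp add: vm_add_right vector_matrix_mul_assoc)
    have zin: "b $ j + ?\<rho>1 * z $ j \<le> z $ j" for j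
    proof -
      have "?\<rho>1 * z $ j = ((?\<rho>1 *s y) v* Ap) $ j" by (simp add: vm_scale z_def)
      also have "\<dots> \<le> ((y v* T1) v* Ap) $ j" by (rule vm_mono[OF nA]) (use key in simp)
      finally show ?thesis using zeq by (metis add_left_mono vector_add_component)
    qed
    have zj1: "z $ j1 > 0" and \<rho>1lt: "?\<rho>1 < 1"
    proof -
      have "b $ j1 \<le> (1 - ?\<rho>1) * z $ j1" using zin[of j1] by (simp add: algebra_simps)
      then have p: "0 < (1 - ?\<rho>1) * z $ j1" using j1 by linarith
      then show "?\<rho>1 < 1" using znn[rule_format, of j1] by (auto simp: zero_less_mult_iff)
      show "z $ j1 > 0" using p \<open>?\<rho>1 < 1\<close> znn by (auto simp: zero_less_mult_iff)
    qed
    define w where "w = z v* V"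
    define wU where "wU = w v* Up"
    have wnn: "\<forall>i. 0 \<le> w $ i" unfolding w_def using vm_nonneg[OF nV znn] by blast
    have zeq2: "z = y v* Up + wU"
      unfolding z_def wU_def w_def by (subst idU2) (simp add: vm_add_right vector_matrix_mul_assoc)
    have yU: "(y v* Up) $ j \<le> b $ j" for j
      unfolding b_def vm_comp using ynn nBU by (auto intro!: sum_mono mult_left_mono)
    have wU_ge: "?\<rho>1 * z $ j \<le> wU $ j" for j
    proof -
      have "wU $ j = z $ j - (y v* Up) $ j" using zeq2 by (metis add_diff_cancel_left' vector_add_component)
      then show ?thesis using yU[of j] zin[of j] by linarith
    qed
    have wsub: "\<forall>j. ?\<rho>1 * w $ j \<le> (w v* T2) $ j"
    proof
      fix j
      have "?\<rho>1 * w $ j = ((?\<rho>1 *s z) v* V) $ j" by (simp add: vm_scale w_def)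
      also have "\<dots> \<le> (wU v* V) $ j" by (rule vm_mono[OF nV]) (use wU_ge in simp)
      also have "\<dots> = (w v* T2) $ j" by (simp add: wU_def T2_def vector_matrix_mul_assoc)
      finally show "?\<rho>1 * w $ j \<le> (w v* T2) $ j" .
    qed
    obtain j0 where j0: "w $ j0 > 0"
    proof (rule ccontr)
      assume "\<not> thesis"
      then have "\<forall>i. w $ i \<le> 0" using that by (meson not_less)
      then have "\<forall>i. w $ i = 0" using wnn by (auto intro: antisym)
      then have "wU $ j1 = 0" by (simp add: wU_def vm_comp)
      moreover have "?\<rho>1 * z $ j1 > 0" using \<rho>1pos zj1 by simp
      ultimately show False using wU_ge[of j1] by linarith
    qed
    show ?thesis by (rule cw_lower[OF nT2 wnn j0 \<rho>1pos wsub])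
  qed
  show ?thesis using part1 part2 by (simp add: T1_def T2_def Bp_def Up_def)
qed


end
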